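(* Let $X$ be a compact Hausdorff space with a continuous injective right action of $P$ such that $X\rtimes P$ admits a Haar system, and put $X_0:=X\,Int(P)$. Let $(s_n)$ be a sequence in $Int(P)$ with $s_{n+1}^{-1}s_n\in Int(P)$ for all $n$ and $s_n\to e$, let $a\in Int(P)$, put $t_n:=s_n^{-1}a$ and assume $t_n\in Int(P)$ for all $n$. Then $X_0t_{n+1}\subset X_0t_n$ for every $n$ and $\bigcap_n X_0t_n=Xa$; i.e. the indicator functions $1_{X_0t_n}$ decrease pointwise to $1_{Xa}$.
   Context: Standing assumptions: $G$ is a second countable locally compact group with left Haar measure $dg$; $P\subset G$ is a closed subsemigroup with identity $e\in P$, such that $G=PP^{-1}$ and the interior $Int(P)$ of $P$ is dense in $P$. For $S\subset X$ and $b\in P$, $Sb=\{yb:y\in S\}$; $X_0=\{xb:x\in X,b\in Int(P)\}$. Semidirect product groupoid: for a compact Hausdorff space $X$ with a continuous right action of $P$ such that each $x\mapsto xa$ is injective, $X\rtimes P:=\{(x,g)\in X\times G:\exists a,b\in P,\ y\in X \text{ with } g=ab^{-1},\ xa=yb\}$, with the subspace topology of $X\times G$ and groupoid operations $(x,g,y)(y,h,z)=(x,gh,z)$, $(x,g,y)^{-1}=(y,g^{-1},x)$. For $x\in X$, $Q_x:=\{g:(x,g)\in X\rtimes P\}$ and $\lambda^x$ is given by $\int\phi\,d\lambda^x=\int\phi(x,g)1_{Q_x}(g)\,dg$. "$X\rtimes P$ admits a Haar system" means $x\mapsto\int\phi\,d\lambda^x$ is continuous for every $\phi\in C_c(X\rtimes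 P)$. *)

theory Defs
  imports "HOL-Analysis.Analysis"
begin

text \<open>The group G is a type 'g of class topological_group_add
(written additively but NOT assumed commutative): g h is g + h, h^-1 is - h,
e is 0. The compact Hausdorff space X is the whole type 'x.  The right action
of P is act :: 'x => 'g => 'x (only its values on P matter).\<close>

definition left_haar_measure :: "'g::{topological_group_add,t2_space} measure \<Rightarrow> bool" where
  "left_haar_measure mu \<longleftrightarrow>
     sets mu = sets borel \<and>
     (\<forall>g. \<forall>A\<in>sets borel. emeasure mu ((\<lambda>h. g + h) ` A) = emeasure mu A) \<and>
     (\<forall>K. compact K \<longrightarrow> emeasure mu K < \<infinity>) \<and>
     (\<forall>U. open U \<and> U \<noteq> {} \<longrightarrow> emeasure mu U > 0) \<and>
     (\<forall>A\<in>sets borel. emeasure mu A = (INF U\<in>{U. open U \<and> A \<subseteq> U}. emeasure mu U)) \<and>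
     (\<forall>U. open U \<longrightarrow> emeasure mu U = (SUP K\<in>{K. compact K \<and> K \<subseteq> U}. emeasure mu K))"

definition standing_semigroup :: "'g::{topological_group_add,t2_space} set \<Rightarrow> bool" where
  "standing_semigroup P \<longleftrightarrow>
     closed P \<and> 0 \<in> P \<and> (\<forall>a\<in>P. \<forall>b\<in>P. a + b \<in> P) \<and>
     (\<forall>g. \<exists>a\<in>P. \<exists>b\<in>P. g = a + - b) \<and>
     P \<subseteq> closure (interior P)"

definition cont_inj_right_action :: "'g::topological_group_add set \<Rightarrow> ('x::topological_space \<Rightarrow> 'g \<Rightarrow> 'x) \<Rightarrow> bool" where
  "cont_inj_right_action P act \<longleftrightarrow>
     (\<forall>x. act x 0 = x) \<and>
     (\<forall>x. \<forall>a\<in>P. \<forall>b\<in>P. act (act x a) b = act x (a + b)) \<and>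
     continuous_on (UNIV \<times> P) (\<lambda>(x, a). act x a) \<and>
     (\<forall>a\<in>P. inj (\<lambda>x. act x a))"

definition sdp :: "'g::group_add set \<Rightarrow> ('x \<Rightarrow> 'g \<Rightarrow> 'x) \<Rightarrow> ('x \<times> 'g) set" where
  "sdp P act = {(x, g). \<exists>a\<in>P. \<exists>b\<in>P. \<exists>y. g = a + - b \<and> act x a = act y b}"

definition Qset :: "'g::group_add set \<Rightarrow> ('x \<Rightarrow> 'g \<Rightarrow> 'x) \<Rightarrow> 'x \<Rightarrow> 'g set" where
  "Qset P act x = {g. (x, g) \<in> sdp P act}"

definition Cc_on :: "('a::topological_space) set \<Rightarrow> ('a \<Rightarrow> complex) set" where
  "Cc_on S = {phi. continuous_on S phi \<and> (\<exists>K. compact K \<and> K \<subseteq> S \<and> (\<forall>p\<in>S - K. phi p = 0))}"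

definition admits_haar_system ::
  "'g::{topological_group_add,t2_space} measure \<Rightarrow> 'g set \<Rightarrow> ('x::topological_space \<Rightarrow> 'g \<Rightarrow> 'x) \<Rightarrow> bool" where
  "admits_haar_system mu P act \<longleftrightarrow>
     (\<forall>phi\<in>Cc_on (sdp P act).
        continuous_on UNIV (\<lambda>x. integral\<^sup>L mu (\<lambda>g. indicator (Qset P act x) g * phi (x, g))))"

definition act_set :: "('x \<Rightarrow> 'g \<Rightarrow> 'x) \<Rightarrow> 'x set \<Rightarrow> 'g \<Rightarrow> 'x set" where
  "act_set act S b = (\<lambda>y. act y b) ` S"

definition X0 :: "'g::topological_space set \<Rightarrow> ('x \<Rightarrow> 'g \<Rightarrow> 'x) \<Rightarrow> 'x set" where
  "X0 P act = {act x b | x b. b \<in> interior P}"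

end

theory Submission
  imports Defs
begin

lemma seq_compact_lim:
  fixes f :: "nat \<Rightarrow> 'a::topological_space"
  assumes "f \<longlonglongrightarrow> l" shows "compact (insert l (range f))"
proof -
  have "compactin euclidean (insert l (range f))"
    by (rule compactin_sequence_with_limit) (use assms in \<open>auto simp: limitin_canonical_iff\<close>)
  then show ?thesis by (simp add: compactin_euclidean_iff)
qed

lemma int_add:
  fixes P :: "'g::topological_group_add set"
  assumes semi: "\<forall>a\<in>P. \<forall>b\<in>P. a + b \<in> P" and b: "b \<in> interior P" and c: "c \<in> interior P"
  shows "b + c \<in> interior P"
proof -
  let ?U = "(\<lambda>h. -b + h) -` interior P"
  have "continuous_on UNIV (\<lambda>h. -b + h)" by (intro continuous_intros)
  then have "open (?U \<inter> UNIV)"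
    using continuous_on_open_vimage[of UNIV "\<lambda>h. -b + h"] open_interior by blast
  then have "open ?U" by simp
  moreover have "?U \<subseteq> P"
  proof
    fix h assume "h \<in> ?U"
    then have "-b + h \<in> P" using interior_subset by blast
    moreover have "b \<in> P" using b interior_subset by blast
    ultimately have "b + (-b + h) \<in> P" using semi by blast
    then show "h \<in> P" by (simp add: add.assoc[symmetric])
  qed
  moreover have "b + c \<in> ?U" using c by (simp add: add.assoc[symmetric])
  ultimately show ?thesis by (meson interior_maximal subsetD)
qed

theorem mainTheorem13:
  fixes mu :: "'g::{topological_group_add,t2_space,second_countable_topology} measure"
    and P :: "'g set"
    and act :: "'x::t2_space \<Rightarrow> 'g \<Rightarrow> 'x"
    and s t :: "nat \<Rightarrow> 'g" and a :: 'g
  assumes "locally_compact_space (euclidean :: 'g topology)"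
    and "left_haar_measure mu"
    and "standing_semigroup P"
    and "compact (UNIV :: 'x set)"
    and "cont_inj_right_action P act"
    and "admits_haar_system mu P act"
    and "\<And>n. s n \<in> interior P"
    and "\<And>n. - s (Suc n) + s n \<in> interior P"
    and "s \<longlonglongrightarrow> 0"
    and "a \<in> interior P"
    and "\<And>n. t n = - s n + a"
    and "\<And>n. t n \<in> interior P"
  shows "(\<forall>n. act_set act (X0 P act) (t (Suc n)) \<subseteq> act_set act (X0 P act) (t n))
     \<and> (\<Inter>n. act_set act (X0 P act) (t n)) = act_set act UNIV a"
proof -
  have semi: "\<forall>a\<in>P. \<forall>b\<in>P. a + b \<in> P" and clP: "closed P"
    using assms(3) by (auto simp: standing_semigroup_def)
  have comp: "\<And>x a b. a \<in> P \<Longrightarrow> b \<in> P \<Longrightarrow> act (act x a) b = act x (a + b)"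
    and cont: "continuous_on (UNIV \<times> P) (\<lambda>(x, a). act x a)"
    using assms(5) by (auto simp: cont_inj_right_action_def)
  have iP: "\<And>g. g \<in> interior P \<Longrightarrow> g \<in> P" using interior_subset by blast
  have part1: "act_set act (X0 P act) (t (Suc n)) \<subseteq> act_set act (X0 P act) (t n)" for n
  proof
    fix z assume "z \<in> act_set act (X0 P act) (t (Suc n))"
    then obtain x b where b: "b \<in> interior P" and z: "z = act (act x b) (t (Suc n))"
      by (auto simp: act_set_def X0_def)
    have c: "- s (Suc n) + s n \<in> interior P" by (rule assms(8))
    have bc: "b + (- s (Suc n) + s n) \<in> interior P" by (rule int_add[OF semi b c])
    have tS: "t (Suc n) = (- s (Suc n) + s n) + t n" using assms(11) by (simp add: add.assoc)
    have "z = act x (b + t (Suc n))"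
      using z comp iP b assms(12) by simp
    then have "z = act x (b + ((- s (Suc n) + s n) + t n))"
      using tS by simp
    also have "\<dots> = act (act x (b + (- s (Suc n) + s n))) (t n)"
      using comp iP bc assms(12) by (simp add: add.assoc)
    finally show "z \<in> act_set act (X0 P act) (t n)"
      using bc by (auto simp: act_set_def X0_def)
  qed
  have tlim: "t \<longlonglongrightarrow> a"
  proof -
    have "(\<lambda>n. - s n + a) \<longlonglongrightarrow> - 0 + a"
      by (intro tendsto_intros assms(9))
    moreover have "t = (\<lambda>n. - s n + a)" using assms(11) by auto
    ultimately show ?thesis by simp
  qed
  have sup: "act_set act UNIV a \<subseteq> act_set act (X0 P act) (t n)" for n
  proof
    fix z assume "z \<in> act_set act UNIV a"
    then obtain y where z: "z = act y a" by (auto simp: act_set_def)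
    have "act (act y (s n)) (t n) = act y (s n + (- s n + a))"
      using comp iP assms(7,11,12) by simp
    also have "\<dots> = z" using z by (simp add: add.assoc[symmetric])
    finally show "z \<in> act_set act (X0 P act) (t n)"
      using assms(7) unfolding act_set_def X0_def by blast
  qed
  have sub: "z \<in> act_set act UNIV a" if zI: "z \<in> (\<Inter>n. act_set act (X0 P act) (t n))" for z
  proof -
    define T where "T = insert a (range t)"
    have cT: "compact T" unfolding T_def by (rule seq_compact_lim[OF tlim])
    have TP: "T \<subseteq> P" unfolding T_def using iP assms(10,12) by auto
    define f where "f = (\<lambda>(x, a). act x a :: 'x)"
    have cf: "continuous_on (UNIV \<times> T) f"
      unfolding f_def by (rule continuous_on_subset[OF cont]) (use TP in auto)
    have cUT: "compact ((UNIV::'x set) \<times> T)" using compact_Times[OF assms(4) cT] by simp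
    have "closed ((UNIV \<times> T) \<inter> f -` {z})"
      by (rule continuous_closed_preimage[OF cf]) (auto intro: compact_imp_closed cUT)
    then have "compact ((UNIV \<times> T) \<inter> f -` {z})"
      using compact_Int_closed[OF cUT] by (metis Int_assoc Int_absorb)
    then have "compact (snd ` ((UNIV \<times> T) \<inter> f -` {z}))"
      by (rule compact_continuous_image[rotated]) (intro continuous_intros)
    then have cl: "closed (snd ` ((UNIV \<times> T) \<inter> f -` {z}))" by (rule compact_imp_closed)
    have mem: "t n \<in> snd ` ((UNIV \<times> T) \<inter> f -` {z})" for n
    proof -
      from zI have "z \<in> act_set act (X0 P act) (t n)" by blast
      then obtain x b where "b \<in> interior P" "z = act (act x b) (t n)"
        by (auto simp: act_set_def X0_def)
      then show ?thesis
        by (intro image_eqI[where x="(act x b, t n)"]) (auto simp: f_def T_def)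
    qed
    have "a \<in> snd ` ((UNIV \<times> T) \<inter> f -` {z})"
      using closed_sequentially[OF cl mem tlim] by blast
    then obtain y where "act y a = z" by (auto simp: f_def)
    then show ?thesis by (auto simp: act_set_def)
  qed
  show ?thesis using part1 sup sub by blast
qed

end
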